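(* The irreducible $\lambda$-quiddities over $(\mathbb{Z}/2\mathbb{Z})\times(\mathbb{Z}/3\mathbb{Z})$ are exactly, up to cyclic permutation, the following (entries are pairs (residue mod 2, residue mod 3)): - $((1,1),(1,1),(1,1))$, $((1,-1),(1,-1),(1,-1))$; - $((0,0),(0,0),(0,0),(0,0))$, $((0,0),(0,1),(0,0),(0,-1))$, $((0,0),(1,0),(0,0),(1,0))$, $((0,1),(0,-1),(0,1),(0,-1))$, $((1,0),(0,-1),(1,0),(0,1))$; - $((1,0),(1,0),(1,0),(1,0),(1,0),(1,0))$, $((0,1),(0,1),(0,1),(0,1),(0,1),(0,1))$, $((0,-1),(0,-1),(0,-1),(0,-1),(0,-1),(0,-1))$.
   Context: For $a_1,\ldots,a_n$ in a commutative unital ring $A$, $M_n(a_1,\ldots,a_n)=\begin{pmatrix}a_n&-1\\1&0\end{pmatrix}\cdots\begin{pmatrix}a_1&-1\\1&0\end{pmatrix}$. An $n$-tuple $(a_1,\ldots,a_n)\in A^n$ is a $\lambda$-quiddity over $A$ if $M_n(a_1,\ldots,a_n)=\pm\mathrm{Id}$. For $(a_1,\ldots,a_n)\in A^n$, $(b_1,\ldots,b_m)\in A^m$, define $(a_1,\ldots,a_n)\oplus(b_1,\ldots,b_m)=(a_1+b_m,a_2,\ldots,a_{n-1},a_n+b_1,b_2,\ldots,b_{m-1})$. Write $(a_1,\ldots,a_n)\sim(b_1,\ldots,b_n)$ if $(b_1,\ldots,b_n)$ is obtained from $(a_1,\ldots,a_n)$ or from $(a_n,\ldots,a_1)$ by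 a cyclic permutation. A $\lambda$-quiddity $(c_1,\ldots,c_n)$ with $n\ge3$ is reducible if there exist a $\lambda$-quiddity $(b_1,\ldots,b_l)$ and a tuple $(a_1,\ldots,a_m)$ with $l,m\ge3$ and $(c_1,\ldots,c_n)\sim(a_1,\ldots,a_m)\oplus(b_1,\ldots,b_l)$; it is irreducible otherwise (by convention $(0,0)$ is reducible). *)

theory Defs
  imports Main "HOL-Library.Product_Plus" "HOL-Library.Numeral_Type"
begin

instantiation prod :: (times, times) times
begin
definition times_prod_def: "x * y = (fst x * fst y, snd x * snd y)"
instance ..
end

instantiation prod :: (one, one) one
begin
definition one_prod_def: "1 = (1, 1)"
instance ..
end

instance prod :: (comm_ring_1, comm_ring_1) comm_ring_1
  by standard (auto simp: times_prod_def one_prod_def zero_prod_def plus_prod_def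
      algebra_simps prod_eq_iff)

section \<open>2x2 matrices, represented as (m11, m12, m21, m22)\<close>

type_synonym 'a mat2 = "'a \<times> 'a \<times> 'a \<times> 'a"

fun mmul2 :: "'a::comm_ring_1 mat2 \<Rightarrow> 'a mat2 \<Rightarrow> 'a mat2" where
  "mmul2 (a, b, c, d) (e, f, g, h) = (a*e + b*g, a*f + b*h, c*e + d*g, c*f + d*h)"

definition id2 :: "'a::comm_ring_1 mat2" where
  "id2 = (1, 0, 0, 1)"

definition neg_id2 :: "'a::comm_ring_1 mat2" where
  "neg_id2 = (-1, 0, 0, -1)"

definition elem_mat :: "'a::comm_ring_1 \<Rightarrow> 'a mat2" where
  "elem_mat a = (a, -1, 1, 0)"

text \<open>M_n(a_1,...,a_n) = E(a_n) * ... * E(a_1), where E(a) = [[a,-1],[1,0]].\<close>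
definition Mquid :: "'a::comm_ring_1 list \<Rightarrow> 'a mat2" where
  "Mquid xs = foldl (\<lambda>m a. mmul2 (elem_mat a) m) id2 xs"

definition lambda_quiddity :: "'a::comm_ring_1 list \<Rightarrow> bool" where
  "lambda_quiddity xs \<longleftrightarrow> Mquid xs = id2 \<or> Mquid xs = neg_id2"

text \<open>(a_1..a_n) \<oplus> (b_1..b_m) = (a_1+b_m, a_2,..,a_{n-1}, a_n+b_1, b_2,..,b_{m-1})\<close>
definition quid_sum :: "'a::comm_ring_1 list \<Rightarrow> 'a list \<Rightarrow> 'a list" where
  "quid_sum as bs =
     [hd as + last bs] @ take (length as - 2) (drop 1 as) @ [last as + hd bs]
       @ take (length bs - 2) (drop 1 bs)"

definition quid_equiv :: "'a list \<Rightarrow> 'a list \<Rightarrow> bool" where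
  "quid_equiv xs ys \<longleftrightarrow> (\<exists>k. ys = rotate k xs \<or> ys = rotate k (rev xs))"

definition reducible_quid :: "'a::comm_ring_1 list \<Rightarrow> bool" where
  "reducible_quid cs \<longleftrightarrow> lambda_quiddity cs \<and> length cs \<ge> 3 \<and>
     (\<exists>as bs. length as \<ge> 3 \<and> length bs \<ge> 3 \<and> lambda_quiddity bs \<and>
        quid_equiv cs (quid_sum as bs))"

text \<open>Irreducible: a lambda-quiddity of length at least 3 that is not reducible.
  (Length-1 tuples are never lambda-quiddities; the only length-2 one, (0,0),
  is reducible by convention.)\<close>
definition irreducible_quid :: "'a::comm_ring_1 list \<Rightarrow> bool" where
  "irreducible_quid cs \<longleftrightarrow> lambda_quiddity cs \<and> length cs \<ge> 3 \<and> \<not> reducible_quid cs"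

end

theory Submission
  imports Defs
begin


definition K :: "'a::comm_ring_1 list \<Rightarrow> 'a" where "K w = fst (Mquid w)"

lemma mmul2_assoc: "mmul2 (mmul2 A B) C = mmul2 A (mmul2 B (C::'a::comm_ring_1 mat2))"
  by (cases A; cases B; cases C) (simp add: algebra_simps)

lemma mmul2_id: "mmul2 id2 A = (A::'a::comm_ring_1 mat2)" "mmul2 A id2 = A"
  by (cases A; simp add: id2_def)+

lemma Mquid_Nil[simp]: "Mquid [] = id2" by (simp add: Mquid_def)

lemma Mquid_snoc[simp]: "Mquid (xs @ [a]) = mmul2 (elem_mat a) (Mquid xs)"
  by (simp add: Mquid_def)

lemma foldl_gen: "foldl (\<lambda>m a. mmul2 (elem_mat a) m) m0 xs = mmul2 (Mquid xs) m0"
proof (induction xs rule: rev_induct)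
  case Nil then show ?case by (simp add: mmul2_id)
next
  case (snoc x xs) then show ?case by (simp add: mmul2_assoc)
qed

lemma Mquid_Cons: "Mquid (x # xs) = mmul2 (Mquid xs) (elem_mat x)"
proof -
  have "Mquid (x # xs) = foldl (\<lambda>m a. mmul2 (elem_mat a) m) (mmul2 (elem_mat x) id2) xs"
    unfolding Mquid_def by simp
  then show ?thesis by (simp only: foldl_gen mmul2_id)
qed

lemma det_Mquid: "Mquid xs = (p,q,r,s) \<Longrightarrow> p*s - q*r = 1"
proof (induction xs arbitrary: p q r s rule: rev_induct)
  case Nil then show ?case by (simp add: id2_def)
next
  case (snoc x xs)
  obtain p' q' r' s' where e: "Mquid xs = (p',q',r',s')" by (cases "Mquid xs") auto
  with snoc.IH have d: "p'*s' - q'*r' = 1" by blast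
  from snoc.prems e have "p = x*p' - r'" "q = x*q' - s'" "r = p'" "s = q'"
    by (auto simp: elem_mat_def)
  then have "p*s - q*r = (x*p' - r')*q' - (x*q' - s')*p'" by simp
  also have "\<dots> = p'*s' - q'*r'" by (simp add: algebra_simps)
  finally have "p*s - q*r = p'*s' - q'*r'" .
  then show ?case using d by (rule trans)
qed

lemma Mquid_frame: "Mquid (x # w @ [y]) = mmul2 (elem_mat y) (mmul2 (Mquid w) (elem_mat x))"
  by (simp add: Mquid_Cons mmul2_assoc)

lemma split3: "length v \<ge> 2 \<Longrightarrow> \<exists>v1 mid vm. v = v1 # mid @ [vm]"
proof (cases v)
  case (Cons v1 v')
  assume "length v \<ge> 2"
  then have "v' \<noteq> []" using Cons by auto
  then have "v' = butlast v' @ [last v']" by simp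
  then show ?thesis using Cons by blast
qed simp

lemma lemA:
  fixes cs :: "'a::comm_ring_1 list"
  assumes lq: "lambda_quiddity cs" and rot: "rotate j cs = v @ w" and lv: "length v \<ge> 3"
    and lw: "w \<noteq> []" and u: "K w = 1 \<or> K w = -1"
  shows "reducible_quid cs"
proof -
  obtain p q r s where e: "Mquid w = (p,q,r,s)" by (cases "Mquid w") auto
  have d: "p*s - q*r = 1" using det_Mquid[OF e] .
  have pk: "p = 1 \<or> p = -1" using u e by (simp add: K_def)
  define x where "x = - p * q"
  define y where "y = p * r"
  define bs where "bs = x # w @ [y]"
  have lbs: "lambda_quiddity bs"
  proof -
    have "Mquid bs = mmul2 (elem_mat y) (mmul2 (p,q,r,s) (elem_mat x))"
      unfolding bs_def Mquid_frame e ..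
    also have "\<dots> = (-p, 0, 0, -p)"
      using pk
    proof
      assume p: "p = 1"
      then have s: "s = 1 + q*r" using d by (simp add: algebra_simps)
      show ?thesis unfolding x_def y_def elem_mat_def p s by (simp add: algebra_simps)
    next
      assume p: "p = -1"
      then have s0: "-s = 1 + q*r" using d by (simp add: algebra_simps)
      have s: "s = -1 - q*r"
      proof -
        have "s = - (-s)" by simp
        also have "\<dots> = -1 - q*r" unfolding s0 by simp
        finally show ?thesis .
      qed
      show ?thesis unfolding x_def y_def elem_mat_def p s by (simp add: algebra_simps)
    qed
    finally show ?thesis using pk by (auto simp: lambda_quiddity_def id2_def neg_id2_def)
  qed
  obtain v1 mid vm where vv: "v = v1 # mid @ [vm]"
    using split3[of v] lv by auto
  define as where "as = (v1 - y) # mid @ [vm - x]"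
  have qs: "quid_sum as bs = v @ w"
    unfolding quid_sum_def as_def bs_def vv by simp
  have E: "quid_equiv cs (quid_sum as bs)"
    unfolding qs quid_equiv_def using rot[symmetric] by blast
  have LA: "length as \<ge> 3" using lv vv as_def by simp
  have LB: "length bs \<ge> 3" using lw bs_def by (cases w) auto
  have LC: "length cs \<ge> 3" proof -
    have "length cs = length v + length w" using arg_cong[OF rot, of length] by simp
    then show ?thesis using lv by simp
  qed
  have "\<exists>as bs. length as \<ge> 3 \<and> length bs \<ge> 3 \<and> lambda_quiddity bs \<and> quid_equiv cs (quid_sum as bs)"
    by (rule exI[of _ as], rule exI[of _ bs]) (intro conjI LA LB lbs E)
  then show ?thesis using lq LC unfolding reducible_quid_def by (intro conjI)
qed

lemma lemB:
  fixes cs :: "'a::comm_ring_1 list"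
  assumes "reducible_quid cs"
  shows "\<exists>j v w. (rotate j cs = v @ w \<or> rotate j (rev cs) = v @ w) \<and> length v \<ge> 3 \<and> w \<noteq> [] \<and> (K w = 1 \<or> K w = -1)"
proof -
  obtain as bs where la: "length as \<ge> 3" and lb: "length bs \<ge> 3" and lq: "lambda_quiddity bs"
    and eq: "quid_equiv cs (quid_sum as bs)"
  proof -
    from assms have "\<exists>as bs. length as \<ge> 3 \<and> length bs \<ge> 3 \<and> lambda_quiddity bs \<and> quid_equiv cs (quid_sum as bs)"
      unfolding reducible_quid_def by (elim conjE)
    then show ?thesis
      apply (elim exE conjE)
      apply (erule that)
      apply assumption+
      done
  qed
  obtain a1 mid am where aa: "as = a1 # mid @ [am]"
    using split3[of as] la by auto
  obtain x w y where bb: "bs = x # w @ [y]"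
    using split3[of bs] lb by auto
  have wne: "w \<noteq> []" using lb bb by auto
  define v where "v = (a1 + y) # mid @ [am + x]"
  have qs: "quid_sum as bs = v @ w" unfolding quid_sum_def aa bb v_def by simp
  have lv: "length v \<ge> 3" using la aa v_def by simp
  obtain p q r s where e: "Mquid w = (p,q,r,s)" by (cases "Mquid w") auto
  have "Mquid bs = mmul2 (elem_mat y) (mmul2 (p,q,r,s) (elem_mat x))"
    unfolding bb Mquid_frame e ..
  then have "snd (snd (snd (Mquid bs))) = - p" by (simp add: elem_mat_def)
  with lq have "-p = 1 \<or> -p = -1" by (auto simp: lambda_quiddity_def id2_def neg_id2_def)
  then have "p = 1 \<or> p = -1" by (metis add.inverse_inverse)
  then have u: "K w = 1 \<or> K w = -1" by (simp add: K_def e)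
  from eq obtain k where k: "v @ w = rotate k cs \<or> v @ w = rotate k (rev cs)"
    unfolding quid_equiv_def qs by (elim exE)
  show ?thesis
    apply (rule exI[of _ k], rule exI[of _ v], rule exI[of _ w])
    using k lv wne u by auto
qed

lemma quid3:
  fixes a b c :: "'a::comm_ring_1"
  assumes "lambda_quiddity [a,b,c]"
  shows "(a = 1 \<and> b = 1 \<and> c = 1) \<or> (a = -1 \<and> b = -1 \<and> c = -1)"
proof -
  have M: "Mquid [a,b,c] = (c*(b*a-1) - a, 1 - c*b, b*a - 1, -b)"
    by (simp add: Mquid_def id2_def elem_mat_def algebra_simps)
  from assms consider "Mquid [a,b,c] = id2" | "Mquid [a,b,c] = neg_id2"
    unfolding lambda_quiddity_def by blast
  then show ?thesis
  proof cases
    case 1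
    then have e: "c*(b*a-1) - a = 1" "1 - c*b = 0" "b*a - 1 = 0" "-b = 1"
      unfolding M id2_def by auto
    then have b: "b = -1" by (metis add.inverse_inverse)
    have "b*a = 1" "c*b = 1" using e by (simp_all add: algebra_simps)
    then have "-a = 1" "-c = 1" using b by simp_all
    then have "a = -1" "c = -1" by (metis add.inverse_inverse)+
    with b show ?thesis by simp
  next
    case 2
    then have e: "c*(b*a-1) - a = -1" "1 - c*b = 0" "b*a - 1 = 0" "-b = -1"
      unfolding M neg_id2_def by auto
    then have b: "b = 1" by (metis add.inverse_inverse)
    have "b*a = 1" "c*b = 1" using e by (simp_all add: algebra_simps)
    then have "a = 1" "c = 1" using b by simp_all
    with b show ?thesis by simp
  qed
qed



type_synonym T = "2 \<times> 3"

lemma ex3: "(x::3) = 0 \<or> x = 1 \<or> x = -1"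
proof (cases x)
  case (of_int z) then show ?thesis by (cases "z = 0"; cases "z=1"; cases "z=2"; auto)
qed
lemma ex2: "(x::2) = 0 \<or> x = 1"
proof (cases x)
  case (of_int z) then show ?thesis by (cases "z = 0"; cases "z=1"; auto)
qed
lemma ex6: "(x::T) = (0,0) \<or> x = (0,1) \<or> x = (0,-1) \<or> x = (1,0) \<or> x = (1,1) \<or> x = (1,-1)"
  using ex2[of "fst x"] ex3[of "snd x"] by (cases x) auto

lemmas ar = times_prod_def one_prod_def zero_prod_def

definition nu :: "T \<Rightarrow> bool" where "nu x \<longleftrightarrow> \<not> (x = 1 \<or> x = -1)"

definition R0 :: "T list list" where "R0 = 
    [ [(1,1), (1,1), (1,1)],
    [(1,1), (1,1), (1,1)],
    [(1,1), (1,1), (1,1)],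
    [(1,-1), (1,-1), (1,-1)],
    [(1,-1), (1,-1), (1,-1)],
    [(1,-1), (1,-1), (1,-1)],
    [(0,0), (0,0), (0,0), (0,0)],
    [(0,0), (0,0), (0,0), (0,0)],
    [(0,0), (0,0), (0,0), (0,0)],
    [(0,0), (0,0), (0,0), (0,0)],
    [(0,0), (0,1), (0,0), (0,-1)],
    [(0,1), (0,0), (0,-1), (0,0)],
    [(0,0), (0,-1), (0,0), (0,1)],
    [(0,-1), (0,0), (0,1), (0,0)],
    [(0,0), (1,0), (0,0), (1,0)],
    [(1,0), (0,0), (1,0), (0,0)],
    [(0,0), (1,0), (0,0), (1,0)],
    [(1,0), (0,0), (1,0), (0,0)],
    [(0,1), (0,-1), (0,1), (0,-1)],
    [(0,-1), (0,1), (0,-1), (0,1)],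
    [(0,1), (0,-1), (0,1), (0,-1)],
    [(0,-1), (0,1), (0,-1), (0,1)],
    [(1,0), (0,-1), (1,0), (0,1)],
    [(0,-1), (1,0), (0,1), (1,0)],
    [(1,0), (0,1), (1,0), (0,-1)],
    [(0,1), (1,0), (0,-1), (1,0)],
    [(1,0), (1,0), (1,0), (1,0), (1,0), (1,0)],
    [(1,0), (1,0), (1,0), (1,0), (1,0), (1,0)],
    [(1,0), (1,0), (1,0), (1,0), (1,0), (1,0)],
    [(1,0), (1,0), (1,0), (1,0), (1,0), (1,0)],
    [(1,0), (1,0), (1,0), (1,0), (1,0), (1,0)],
    [(1,0), (1,0), (1,0), (1,0), (1,0), (1,0)],
    [(0,1), (0,1), (0,1), (0,1), (0,1), (0,1)],
    [(0,1), (0,1), (0,1), (0,1), (0,1), (0,1)],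
    [(0,1), (0,1), (0,1), (0,1), (0,1), (0,1)],
    [(0,1), (0,1), (0,1), (0,1), (0,1), (0,1)],
    [(0,1), (0,1), (0,1), (0,1), (0,1), (0,1)],
    [(0,1), (0,1), (0,1), (0,1), (0,1), (0,1)],
    [(0,-1), (0,-1), (0,-1), (0,-1), (0,-1), (0,-1)],
    [(0,-1), (0,-1), (0,-1), (0,-1), (0,-1), (0,-1)],
    [(0,-1), (0,-1), (0,-1), (0,-1), (0,-1), (0,-1)],
    [(0,-1), (0,-1), (0,-1), (0,-1), (0,-1), (0,-1)],
    [(0,-1), (0,-1), (0,-1), (0,-1), (0,-1), (0,-1)],
    [(0,-1), (0,-1), (0,-1), (0,-1), (0,-1), (0,-1)] ]"

definition LL :: "T list list" where "LL = 
    [ [(1,1), (1,1), (1,1)],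
    [(1,-1), (1,-1), (1,-1)],
    [(0,0), (0,0), (0,0), (0,0)],
    [(0,0), (0,1), (0,0), (0,-1)],
    [(0,0), (1,0), (0,0), (1,0)],
    [(0,1), (0,-1), (0,1), (0,-1)],
    [(1,0), (0,-1), (1,0), (0,1)],
    [(1,0), (1,0), (1,0), (1,0), (1,0), (1,0)],
    [(0,1), (0,1), (0,1), (0,1), (0,1), (0,1)],
    [(0,-1), (0,-1), (0,-1), (0,-1), (0,-1), (0,-1)] ]"

definition good :: "T list \<Rightarrow> bool" where
  "good c \<longleftrightarrow> list_all (\<lambda>i. nu (K (drop i c))) [3..<length c]"

lemma R0_lq: "\<forall>c\<in>set R0. lambda_quiddity c"
  by (simp add: R0_def lambda_quiddity_def Mquid_def elem_mat_def id2_def neg_id2_def ar)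

lemma R0_good: "\<forall>c\<in>set R0. good c"
  by (simp add: R0_def good_def nu_def K_def Mquid_def elem_mat_def id2_def ar)

lemma R0_rot1: "\<forall>c\<in>set R0. rotate1 c \<in> set R0"
  by (simp add: R0_def)

lemma R0_rev: "\<forall>c\<in>set R0. rev c \<in> set R0"
  by (simp add: R0_def)

lemma R0_conc: "R0 = concat (map (\<lambda>qs. map (\<lambda>k. rotate k qs) [0..<length qs]) LL)"
  by (simp add: R0_def LL_def upt_Suc rotate_drop_take)

lemma rot_bound: "qs \<noteq> [] \<Longrightarrow> (\<exists>k. cs = rotate k qs) \<longleftrightarrow> (\<exists>k<length qs. cs = rotate (k::nat) qs)"
proof
  assume ne: "qs \<noteq> []" and "\<exists>k. cs = rotate k qs"
  then obtain k where "cs = rotate k qs" by blast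
  then have "cs = rotate (k mod length qs) qs" by (simp add: rotate_conv_mod[of k])
  moreover have "k mod length qs < length qs" using ne by simp
  ultimately show "\<exists>k<length qs. cs = rotate k qs" by blast
qed blast

lemma LL_ne: "\<forall>qs\<in>set LL. qs \<noteq> []" by (simp add: LL_def)

lemma RHS_iff: "(\<exists>qs\<in>set LL. \<exists>k. cs = rotate k qs) \<longleftrightarrow> cs \<in> set R0"
proof -
  have "(\<exists>qs\<in>set LL. \<exists>k. cs = rotate k qs) \<longleftrightarrow> (\<exists>qs\<in>set LL. \<exists>k<length qs. cs = rotate k qs)"
    using LL_ne rot_bound by blast
  also have "\<dots> \<longleftrightarrow> cs \<in> set R0" unfolding R0_conc set_concat set_map set_upt by (auto simp: image_iff) (metis atLeastLessThan_iff zero_le, blast)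
  finally show ?thesis .
qed

lemma R0_len: "\<forall>c\<in>set R0. length c \<ge> 3" by (simp add: R0_def)

lemma rot_R0: "c \<in> set R0 \<Longrightarrow> rotate j c \<in> set R0"
  by (induction j) (auto simp: R0_rot1)

lemma R0_irr:
  assumes c: "c \<in> set R0" shows "irreducible_quid c"
proof -
  have lq: "lambda_quiddity c" using R0_lq c by blast
  have lc: "length c \<ge> 3" using R0_len c by blast
  have "\<not> reducible_quid c"
  proof
    assume "reducible_quid c"
    from lemB[OF this] obtain j v w where
      h: "rotate j c = v @ w \<or> rotate j (rev c) = v @ w" and lv: "length v \<ge> 3" and wne: "w \<noteq> []"
      and u: "K w = 1 \<or> K w = -1" by blast
    have "v @ w \<in> set R0" using h rot_R0 c R0_rev by metis
    then have g: "good (v @ w)" using R0_good by blast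
    have "length v \<in> set [3..<length (v @ w)]" using lv wne by simp
    then have "nu (K (drop (length v) (v @ w)))" using g unfolding good_def list_all_iff by blast
    then show False using u by (simp add: nu_def)
  qed
  then show ?thesis using lq lc unfolding irreducible_quid_def by blast
qed

lemma Wn:
  assumes irr: "irreducible_quid cs" and cs: "cs = u @ w @ v" and l: "3 \<le> length u + length v"
    and wne: "w \<noteq> []"
  shows "nu (K w)"
proof (rule ccontr)
  assume "\<not> nu (K w)"
  then have k: "K w = 1 \<or> K w = -1" by (simp add: nu_def)
  have "rotate (length (u @ w)) ((u @ w) @ v) = v @ (u @ w)" by (rule rotate_append)
  then have r: "rotate (length (u @ w)) cs = (v @ u) @ w" using cs by simp
  have lq: "lambda_quiddity cs" using irr unfolding irreducible_quid_def by blast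
  have "reducible_quid cs" by (rule lemA[OF lq r _ wne k]) (use l in simp)
  then show False using irr unfolding irreducible_quid_def by blast
qed

lemma K1: "K [a] = (a::'a::comm_ring_1)" by (simp add: K_def Mquid_def elem_mat_def id2_def)
lemma K2: "K [a, b] = b * a - (1::'a::comm_ring_1)" by (simp add: K_def Mquid_def elem_mat_def id2_def)

lemma pairl: "nu x \<Longrightarrow> nu y \<Longrightarrow> nu (y*x-1)
  \<Longrightarrow> x = y \<and> (x = (0,1) \<or> x = (0,-1) \<or> x = (1,0))"
  unfolding nu_def using ex6[of x] ex6[of y] by (auto simp: ar)

lemma two_T: "(2::T) = (0,-1)"
proof -
  have "(2::T) = 1 + 1" by simp
  also have "(1::T) + 1 = (0,-1)" by (simp add: ar)
  finally show ?thesis .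
qed

lemma nu_cases: "nu x \<Longrightarrow> x = (0,0) \<or> x = (0,1) \<or> x = (0,-1) \<or> x = (1,0)"
  unfolding nu_def using ex6[of x] by (auto simp: ar)

lemma fin4a: assumes "nu a" "nu b" "a*b = 0" shows "[a,b,-a,-b] \<in> set R0"
  using nu_cases[OF assms(1)] nu_cases[OF assms(2)] assms(3) by (elim disjE; simp add: ar R0_def two_T)

lemma fin4b: assumes "nu a" "nu b" "a*b = 2" shows "[a,b,a,b] \<in> set R0"
  using nu_cases[OF assms(1)] nu_cases[OF assms(2)] assms(3) by (elim disjE; simp add: ar R0_def two_T)

lemma fin5: "x = (0,1) \<or> x = (0,-1) \<or> x = (1,0) \<Longrightarrow> \<not> lambda_quiddity [x,x,x,x,x::T]"
  by (auto simp: lambda_quiddity_def Mquid_def elem_mat_def id2_def neg_id2_def ar)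

lemma fin6: "x = (0,1) \<or> x = (0,-1) \<or> x = (1,0) \<Longrightarrow> [x,x,x,x,x,x::T] \<in> set R0"
  by (auto simp: R0_def)

lemma fin7: "x = (0,1) \<or> x = (0,-1) \<or> x = (1,0) \<Longrightarrow> \<not> nu (K [x,x,x,x::T])"
  by (auto simp: nu_def K_def Mquid_def elem_mat_def id2_def ar)

lemma quid4:
  fixes a b c d :: "'a::comm_ring_1"
  assumes "lambda_quiddity [a,b,c,d]"
  shows "(c = -a \<and> d = -b \<and> a*b = 0) \<or> (c = a \<and> d = b \<and> a*b = 2)"
proof -
  have M: "Mquid [a,b,c,d] = (d*(c*(b*a-1) - a) - (b*a - 1), d*(1 - c*b) + b, c*(b*a-1) - a, 1 - c*b)"
    by (simp add: Mquid_def id2_def elem_mat_def algebra_simps)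
  from assms consider "Mquid [a,b,c,d] = id2" | "Mquid [a,b,c,d] = neg_id2"
    unfolding lambda_quiddity_def by blast
  then show ?thesis
  proof cases
    case 1
    then have e: "d*(c*(b*a-1) - a) - (b*a - 1) = 1" "d*(1 - c*b) + b = 0" "c*(b*a-1) - a = 0" "1 - c*b = 1"
      unfolding M id2_def by auto
    have cb: "c*b = 0" using e(4) by simp
    have "d + b = 0" using e(2) cb by simp
    then have d: "d = -b"
    proof -
      assume h: "d + b = 0"
      have "d = (d + b) - b" by simp
      also have "\<dots> = -b" unfolding h by simp
      finally show ?thesis .
    qed
    have "c*b*a - c - a = 0" using e(3) by (simp add: algebra_simps)
    then have "- c - a = 0" using cb by simp
    then have c: "c = -a"
    proof -
      assume h: "- c - a = 0"
      have "c = - (- c - a) - a" by simp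
      also have "\<dots> = -a" unfolding h by simp
      finally show ?thesis .
    qed
    have "0 - (b*a - 1) = 1" using e(1) e(3) by simp
    then have "b*a = 0" by simp
    then show ?thesis using c d by (simp add: mult.commute)
  next
    case 2
    then have e: "d*(c*(b*a-1) - a) - (b*a - 1) = -1" "d*(1 - c*b) + b = 0" "c*(b*a-1) - a = 0" "1 - c*b = -1"
      unfolding M neg_id2_def by auto
    have cb: "c*b = 2" using e(4) by (simp add: algebra_simps)
    have "d*(1 - 2) + b = 0" using e(2) unfolding cb .
    then have h: "b - d = 0" by simp
    have d: "d = b"
    proof -
      have "d = b - (b - d)" by simp
      also have "\<dots> = b" unfolding h by simp
      finally show ?thesis .
    qed
    have "0 - (b*a - 1) = -1" using e(1) e(3) by simp
    then have ba: "b*a = 2" by (simp add: algebra_simps)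
    have "c - a = 0" using e(3) ba by simp
    then have c: "c = a" by simp
    show ?thesis using c d ba by (simp add: mult.commute)
  qed
qed

lemma irr_R0:
  assumes irr: "irreducible_quid (cs::T list)" shows "cs \<in> set R0"
proof -
  have lq: "lambda_quiddity cs" and lc: "length cs \<ge> 3" using irr unfolding irreducible_quid_def by auto
  note W = Wn[OF irr]
  consider (n3) "length cs = 3" | (n4) "length cs = 4" | (n5) "length cs \<ge> 5" using lc by linarith
  then show ?thesis
  proof cases
    case n3
    then obtain a b c where cs: "cs = [a,b,c]"
      by (cases cs; simp; rename_tac l1; case_tac l1; simp; rename_tac l2; case_tac l2; simp)
    from quid3[OF lq[unfolded cs]] show ?thesis unfolding cs by (auto simp: R0_def ar)
  next
    case n4
    then obtain a b c d where cs: "cs = [a,b,c,d]"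
      by (cases cs; simp; rename_tac l1; case_tac l1; simp; rename_tac l2; case_tac l2; simp;
          rename_tac l3; case_tac l3; simp)
    have na: "nu a" using W[of "[]" "[a]" "[b,c,d]"] cs by (simp add: K1)
    have nb: "nu b" using W[of "[a]" "[b]" "[c,d]"] cs by (simp add: K1)
    from quid4[OF lq[unfolded cs]] show ?thesis unfolding cs
      using fin4a[OF na nb] fin4b[OF na nb] by auto
  next
    case n5
    then obtain a b c d e rest where cs: "cs = a#b#c#d#e#rest"
      by (cases cs; simp; rename_tac l1; case_tac l1; simp; rename_tac l2; case_tac l2; simp;
          rename_tac l3; case_tac l3; simp; rename_tac l4; case_tac l4; simp)
    have na: "nu a" using W[of "[]" "[a]" "b#c#d#e#rest"] cs by (simp add: K1)
    have nb: "nu b" using W[of "[a]" "[b]" "c#d#e#rest"] cs by (simp add: K1)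
    have nc: "nu c" using W[of "[a,b]" "[c]" "d#e#rest"] cs by (simp add: K1)
    have nd: "nu d" using W[of "[a,b,c]" "[d]" "e#rest"] cs by (simp add: K1)
    have ne: "nu e" using W[of "[a,b,c,d]" "[e]" "rest"] cs by (simp add: K1)
    have pab: "nu (b*a - 1)" using W[of "[]" "[a,b]" "c#d#e#rest"] cs by (simp add: K2)
    have pbc: "nu (c*b - 1)" using W[of "[a]" "[b,c]" "d#e#rest"] cs by (simp add: K2)
    have pcd: "nu (d*c - 1)" using W[of "[a,b]" "[c,d]" "e#rest"] cs by (simp add: K2)
    have pde: "nu (e*d - 1)" using W[of "[a,b,c]" "[d,e]" "rest"] cs by (simp add: K2)
    have ab: "a = b" and S: "a = (0,1) \<or> a = (0,-1) \<or> a = (1,0)" using pairl[OF na nb pab] by auto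
    have bc: "b = c" using pairl[OF nb nc pbc] by auto
    have cd: "c = d" using pairl[OF nc nd pcd] by auto
    have de: "d = e" using pairl[OF nd ne pde] by auto
    show ?thesis
    proof (cases rest)
      case Nil
      then have "lambda_quiddity [a,a,a,a,a]" using lq cs ab bc cd de by simp
      then show ?thesis using fin5[OF S] by blast
    next
      case (Cons f rest')
      show ?thesis
      proof (cases rest')
        case Nil
        have nf: "nu f" using W[of "[a,b,c,d,e]" "[f]" "[]"] cs Cons Nil by (simp add: K1)
        have pef: "nu (f*e - 1)" using W[of "[a,b,c,d]" "[e,f]" "[]"] cs Cons Nil by (simp add: K2)
        have "e = f" using pairl[OF ne nf pef] by auto
        then have "cs = [a,a,a,a,a,a]" using cs Cons Nil ab bc cd de by simp
        then show ?thesis using fin6[OF S] by simp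
      next
        case (Cons g rest'')
        have "nu (K [a,b,c,d])" using W[of "[]" "[a,b,c,d]" "e#f#g#rest''"] cs \<open>rest = f # rest'\<close> Cons by simp
        then show ?thesis using fin7[OF S] ab bc cd by simp
      qed
    qed
  qed
qed

lemma main_iff: "irreducible_quid (cs::T list) \<longleftrightarrow> cs \<in> set R0"
  using irr_R0 R0_irr by blast


theorem proposition4p2:
  fixes cs :: "(2 \<times> 3) list"
  shows "irreducible_quid cs \<longleftrightarrow>
    (\<exists>qs \<in> set
       [ [(1,1), (1,1), (1,1)],
         [(1,-1), (1,-1), (1,-1)],
         [(0,0), (0,0), (0,0), (0,0)],
         [(0,0), (0,1), (0,0), (0,-1)],
         [(0,0), (1,0), (0,0), (1,0)],
         [(0,1), (0,-1), (0,1), (0,-1)],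
         [(1,0), (0,-1), (1,0), (0,1)],
         [(1,0), (1,0), (1,0), (1,0), (1,0), (1,0)],
         [(0,1), (0,1), (0,1), (0,1), (0,1), (0,1)],
         [(0,-1), (0,-1), (0,-1), (0,-1), (0,-1), (0,-1)] ].
     \<exists>k. cs = rotate k qs)"
  using main_iff[of cs] RHS_iff[of cs] unfolding LL_def by blast

end
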